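(* Let $P$ be a finite poset and $R$ a commutative unital ring. Then there is an isomorphism of $R$-algebras $$Z^3_2(P,R)/Z^3_3(P,R)\cong\bigoplus_{x,y\in P,\ l(x,y)=1}R(e_{xxy}+e_{xyy}),$$ where the right-hand side is the direct sum of algebras (coordinatewise multiplication) and each $R(e_{xxy}+e_{xyy})$ is the subalgebra of $I^3(P,R)$ spanned by the idempotent $e_{xxy}+e_{xyy}$.
   Context: For a finite poset $P$, $P^3_\le=\{(x,y,z)\in P^3: x\le y\le z\}$, and $I^3(P,R)$ is the $R$-module of functions $f:P^3_\le\to R$ with multiplication $(fg)(x_1,x_2,x_3)=\sum f(x_1,y_1,y_2)g(y_1,y_2,x_3)$ over all $x_1\le y_1\le x_2\le y_2\le x_3$. For $x\le y\le z$, $e_{xyz}$ is the function equal to $1$ at $(x,y,z)$ and $0$ elsewhere. For $a\le b$, $l(a,b)$ is the maximum of $|C|-1$ over chains $C$ in the interval $[a,b]$. $J^3_1(P,R)=\{f: f(x,x,x)=0\ \forall x\}$. $[f,g]=fg-gf$; $[U,V]$ is the $R$-submodule spanned by all $[u,v]$, $u\in U,v\in V$. $Z^3_1(P,R)=J^3_1(P,R)$, $Z^3_2(P,R)=[Z^3_1(P,R),Z^3_1(P,R)]$, $Z^3_3(P,R)=[Z^3_2(P,R),Z^3_2(P,R)]$; $Z^3_3(P,R)$ is an ideal of the algebra $Z^3_2(P,R)$, and the quotient carries the induced multiplication. *)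

theory Defs
  imports Main
begin

text \<open>Finite poset P: a type of class order and finite. Elements of I^3(P,R) are
  represented as functions P => P => P => R vanishing outside P^3_le.\<close>

type_synonym ('a,'r) fn3 = "'a \<Rightarrow> 'a \<Rightarrow> 'a \<Rightarrow> 'r"

definition I3 :: "('a::order, 'r::comm_ring_1) fn3 set" where
  "I3 = {f. \<forall>x y z. \<not> (x \<le> y \<and> y \<le> z) \<longrightarrow> f x y z = 0}"

definition add3 :: "('a, 'r::comm_ring_1) fn3 \<Rightarrow> ('a, 'r) fn3 \<Rightarrow> ('a, 'r) fn3" where
  "add3 f g = (\<lambda>a b c. f a b c + g a b c)"

definition smul3 :: "'r::comm_ring_1 \<Rightarrow> ('a, 'r) fn3 \<Rightarrow> ('a, 'r) fn3" where
  "smul3 r f = (\<lambda>a b c. r * f a b c)"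

definition zero3 :: "('a, 'r::comm_ring_1) fn3" where
  "zero3 = (\<lambda>a b c. 0)"

definition mult3 :: "('a::{order,finite}, 'r::comm_ring_1) fn3 \<Rightarrow> ('a, 'r) fn3 \<Rightarrow> ('a, 'r) fn3" where
  "mult3 f g = (\<lambda>x1 x2 x3. if x1 \<le> x2 \<and> x2 \<le> x3 then
      (\<Sum>(y1, y2) \<in> {(y1, y2). x1 \<le> y1 \<and> y1 \<le> x2 \<and> x2 \<le> y2 \<and> y2 \<le> x3}.
          f x1 y1 y2 * g y1 y2 x3)
    else 0)"

definition elem3 :: "'a \<Rightarrow> 'a \<Rightarrow> 'a \<Rightarrow> ('a, 'r::comm_ring_1) fn3" where
  "elem3 x y z = (\<lambda>a b c. if a = x \<and> b = y \<and> c = z then 1 else 0)"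

definition is_chain_in :: "'a::order set \<Rightarrow> 'a \<Rightarrow> 'a \<Rightarrow> bool" where
  "is_chain_in C a b \<longleftrightarrow> C \<subseteq> {a..b} \<and> (\<forall>x\<in>C. \<forall>y\<in>C. x \<le> y \<or> y \<le> x)"

definition len :: "'a::{order,finite} \<Rightarrow> 'a \<Rightarrow> nat" where
  "len a b = Max {card C - 1 | C. is_chain_in C a b}"

definition J31 :: "('a::order, 'r::comm_ring_1) fn3 set" where
  "J31 = {f \<in> I3. \<forall>x. f x x x = 0}"

inductive_set rspan :: "('a, 'r::comm_ring_1) fn3 set \<Rightarrow> ('a, 'r) fn3 set"
  for S :: "('a, 'r) fn3 set" where
  zero: "zero3 \<in> rspan S"
| gen: "s \<in> S \<Longrightarrow> s \<in> rspan S"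
| add: "f \<in> rspan S \<Longrightarrow> g \<in> rspan S \<Longrightarrow> add3 f g \<in> rspan S"
| smul: "f \<in> rspan S \<Longrightarrow> smul3 r f \<in> rspan S"

definition commut3 :: "('a::{order,finite}, 'r::comm_ring_1) fn3 \<Rightarrow> ('a, 'r) fn3 \<Rightarrow> ('a, 'r) fn3" where
  "commut3 f g = (\<lambda>a b c. mult3 f g a b c - mult3 g f a b c)"

definition commsp :: "('a::{order,finite}, 'r::comm_ring_1) fn3 set \<Rightarrow> ('a, 'r) fn3 set \<Rightarrow> ('a, 'r) fn3 set" where
  "commsp U V = rspan {commut3 u v | u v. u \<in> U \<and> v \<in> V}"

definition Z31 :: "('a::{order,finite}, 'r::comm_ring_1) fn3 set" where
  "Z31 = J31"
definition Z32 :: "('a::{order,finite}, 'r::comm_ring_1) fn3 set" where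
  "Z32 = commsp Z31 Z31"
definition Z33 :: "('a::{order,finite}, 'r::comm_ring_1) fn3 set" where
  "Z33 = commsp Z32 Z32"

text \<open>The external direct sum of the subalgebras R(e_xxy + e_xyy), over pairs
  x,y with x <= y and l(x,y) = 1: families d indexed by pairs, with d x y in
  R(e_xxy+e_xyy) for such pairs and d x y = 0 otherwise; operations coordinatewise.\<close>
definition idem :: "'a \<Rightarrow> 'a \<Rightarrow> ('a, 'r::comm_ring_1) fn3" where
  "idem x y = add3 (elem3 x x y) (elem3 x y y)"

definition covpair :: "'a::{order,finite} \<Rightarrow> 'a \<Rightarrow> bool" where
  "covpair x y \<longleftrightarrow> x \<le> y \<and> len x y = 1"

type_synonym ('a,'r) dsum = "'a \<Rightarrow> 'a \<Rightarrow> ('a, 'r) fn3"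

definition DS :: "('a::{order,finite}, 'r::comm_ring_1) dsum set" where
  "DS = {d. \<forall>x y. (covpair x y \<longrightarrow> (\<exists>r. d x y = smul3 r (idem x y)))
                  \<and> (\<not> covpair x y \<longrightarrow> d x y = zero3)}"

definition ds_add :: "('a, 'r::comm_ring_1) dsum \<Rightarrow> ('a, 'r) dsum \<Rightarrow> ('a, 'r) dsum" where
  "ds_add d e = (\<lambda>x y. add3 (d x y) (e x y))"
definition ds_smul :: "'r::comm_ring_1 \<Rightarrow> ('a, 'r) dsum \<Rightarrow> ('a, 'r) dsum" where
  "ds_smul r d = (\<lambda>x y. smul3 r (d x y))"
definition ds_mult :: "('a::{order,finite}, 'r::comm_ring_1) dsum \<Rightarrow> ('a, 'r) dsum \<Rightarrow> ('a, 'r) dsum" where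
  "ds_mult d e = (\<lambda>x y. mult3 (d x y) (e x y))"
definition ds_zero :: "('a, 'r::comm_ring_1) dsum" where
  "ds_zero = (\<lambda>x y. zero3)"

end

theory Submission
  imports Defs
begin

definition sum3 :: "('i \<Rightarrow> ('a, 'r::comm_ring_1) fn3) \<Rightarrow> 'i set \<Rightarrow> ('a, 'r) fn3" where
  "sum3 g A = (\<lambda>a b c. \<Sum>i\<in>A. g i a b c)"

lemma rspan_sum3:
  assumes "finite A" "\<And>i. i \<in> A \<Longrightarrow> g i \<in> rspan S"
  shows "sum3 g A \<in> rspan S"
  using assms
proof (induction A rule: finite_induct)
  case empty
  have "sum3 g {} = zero3" by (simp add: sum3_def zero3_def)
  then show ?case using rspan.zero by metis
next
  case (insert i A)
  have "sum3 g (insert i A) = add3 (g i) (sum3 g A)"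
    using insert.hyps by (simp add: sum3_def add3_def)
  then show ?case using insert rspan.add by (metis insertCI)
qed

lemma rspan_mono: "f \<in> rspan S \<Longrightarrow> S \<subseteq> T \<Longrightarrow> f \<in> rspan T"
  by (induction rule: rspan.induct) (auto intro: rspan.intros)

lemma rspan_sub: "f \<in> rspan S \<Longrightarrow> g \<in> rspan S \<Longrightarrow> (\<lambda>a b c. f a b c - g a b c) \<in> rspan S"
proof -
  assume f: "f \<in> rspan S" and g: "g \<in> rspan S"
  have "(\<lambda>a b c. f a b c - g a b c) = add3 f (smul3 (-1) g)"
    by (simp add: add3_def smul3_def fun_eq_iff)
  then show ?thesis using f g by (metis rspan.add rspan.smul)
qed

lemma commsp_mono: "U \<subseteq> U' \<Longrightarrow> V \<subseteq> V' \<Longrightarrow> commsp U V \<subseteq> commsp U' V'"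
  unfolding commsp_def by (auto elim!: rspan_mono[of _ "{commut3 u v |u v. u \<in> U \<and> v \<in> V}"])

lemma commut_in: "u \<in> U \<Longrightarrow> v \<in> V \<Longrightarrow> commut3 u v \<in> commsp U V"
  unfolding commsp_def by (auto intro: rspan.gen)

lemma decomp:
  fixes h :: "('a::finite, 'r::comm_ring_1) fn3"
  shows "h = sum3 (\<lambda>(a,b,c). smul3 (h a b c) (elem3 a b c)) {(a,b,c). h a b c \<noteq> 0}"
proof (rule ext, rule ext, rule ext)
  fix x y z
  have "sum3 (\<lambda>(a,b,c). smul3 (h a b c) (elem3 a b c)) {(a,b,c). h a b c \<noteq> 0} x y z
     = (\<Sum>p\<in>{(a,b,c). h a b c \<noteq> 0}. if p = (x,y,z) then h x y z else 0)"
    unfolding sum3_def by (intro sum.cong) (auto simp: smul3_def elem3_def split: if_splits)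
  also have "\<dots> = h x y z" by (subst sum.delta) auto
  finally show "h x y z = sum3 (\<lambda>(a,b,c). smul3 (h a b c) (elem3 a b c)) {(a,b,c). h a b c \<noteq> 0} x y z" by simp
qed

lemma mult3_elem:
  fixes a b c :: "'a::{order,finite}"
  shows "mult3 (elem3 a b c) (elem3 a' b' c') = (\<lambda>x1 x2 x3. if x1 = a \<and> a' = b \<and> b' = c \<and> x3 = c'
     \<and> a \<le> b \<and> b \<le> x2 \<and> x2 \<le> c \<and> c \<le> c' then (1::'r::comm_ring_1) else 0)"
proof (intro ext)
  fix x1 x2 x3 :: 'a
  show "mult3 (elem3 a b c) (elem3 a' b' c') x1 x2 x3 = (if x1 = a \<and> a' = b \<and> b' = c \<and> x3 = c'
     \<and> a \<le> b \<and> b \<le> x2 \<and> x2 \<le> c \<and> c \<le> c' then (1::'r) else 0)"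
  proof (cases "x1 \<le> x2 \<and> x2 \<le> x3")
    case True
    let ?S = "{(y1, y2). x1 \<le> y1 \<and> y1 \<le> x2 \<and> x2 \<le> y2 \<and> y2 \<le> x3}"
    have "mult3 (elem3 a b c) (elem3 a' b' c') x1 x2 x3 =
       (\<Sum>p\<in>?S. elem3 a b c x1 (fst p) (snd p) * elem3 a' b' c' (fst p) (snd p) x3)"
      using True by (simp add: mult3_def split_def)
    also have "\<dots> = (\<Sum>p\<in>?S. if p = (b,c) then (if x1 = a \<and> a' = b \<and> b' = c \<and> x3 = c' then 1 else 0) else 0)"
      by (intro sum.cong) (auto simp: elem3_def)
    also have "\<dots> = (if x1 = a \<and> a' = b \<and> b' = c \<and> x3 = c'
     \<and> a \<le> b \<and> b \<le> x2 \<and> x2 \<le> c \<and> c \<le> c' then (1::'r) else 0)"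
      by (subst sum.delta) auto
    finally show ?thesis .
  next
    case False
    then show ?thesis unfolding mult3_def using order_trans by auto
  qed
qed

lemma mult3_add_left: "mult3 (add3 f g) h = add3 (mult3 f h) (mult3 g h)"
  by (simp add: mult3_def add3_def fun_eq_iff sum.distrib ring_distribs split_def)
lemma mult3_add_right: "mult3 h (add3 f g) = add3 (mult3 h f) (mult3 h g)"
  by (simp add: mult3_def add3_def fun_eq_iff sum.distrib ring_distribs split_def)
lemma mult3_smul_left: "mult3 (smul3 r f) g = smul3 r (mult3 f g)"
  by (simp add: mult3_def smul3_def fun_eq_iff sum_distrib_left mult.assoc split_def)
lemma mult3_smul_right: "mult3 f (smul3 r g) = smul3 r (mult3 f g)"
  by (simp add: mult3_def smul3_def fun_eq_iff sum_distrib_left algebra_simps split_def)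
lemma mult3_zero: "mult3 zero3 zero3 = zero3"
  by (simp add: mult3_def zero3_def fun_eq_iff)

lemma len_set_finite: "finite {card C - 1 | C. is_chain_in C (x::'a::{order,finite}) y}"
proof -
  have "{card C - 1 | C. is_chain_in C x y} = (\<lambda>C. card C - 1) ` {C. is_chain_in C x y}" by auto
  then show ?thesis by simp
qed

lemma len_ge: "is_chain_in C x y \<Longrightarrow> card C - 1 \<le> len (x::'a::{order,finite}) y"
  unfolding len_def by (rule Max_ge[OF len_set_finite]) auto

lemma len_le: "(\<And>C. is_chain_in C x y \<Longrightarrow> card C - 1 \<le> n) \<Longrightarrow> len (x::'a::{order,finite}) y \<le> n"
  unfolding len_def
proof (subst Max_le_iff[OF len_set_finite])
  show "{card C - 1 |C. is_chain_in C x y} \<noteq> {}" 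
    using is_chain_in_def[of "{}" x y] by auto
qed auto

lemma covpair_iff: "covpair x y \<longleftrightarrow> (x::'a::{order,finite}) < y \<and> (\<forall>t. x < t \<longrightarrow> \<not> t < y)"
proof
  assume c: "covpair x y"
  then have xy: "x \<le> y" and l: "len x y = 1" by (auto simp: covpair_def)
  have "x \<noteq> y"
  proof
    assume "x = y"
    have "len x y \<le> 0"
    proof (rule len_le)
      fix C assume "is_chain_in C x y"
      then have "C \<subseteq> {x}" using \<open>x = y\<close> by (auto simp: is_chain_in_def)
      then have "card C \<le> 1" using card_mono[of "{x}" C] by simp
      then show "card C - 1 \<le> 0" by simp
    qed
    then show False using l by simp
  qed
  moreover have "\<forall>t. x < t \<longrightarrow> \<not> t < y"
  proof (intro allI impI notI)
    fix t assume "x < t" "t < y"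
    then have "is_chain_in {x,t,y} x y" by (auto simp: is_chain_in_def)
    then have "card {x,t,y} - 1 \<le> len x y" by (rule len_ge)
    moreover have "x \<noteq> t" "t \<noteq> y" "x \<noteq> y" using \<open>x < t\<close> \<open>t < y\<close> by auto
    then have "card {x,t,y} = 3" by simp
    ultimately show False using l by simp
  qed
  ultimately show "x < y \<and> (\<forall>t. x < t \<longrightarrow> \<not> t < y)" using xy by auto
next
  assume a: "x < y \<and> (\<forall>t. x < t \<longrightarrow> \<not> t < y)"
  have "len x y \<le> 1"
  proof (rule len_le)
    fix C assume "is_chain_in C x y"
    then have "C \<subseteq> {x,y}" using a by (force simp: is_chain_in_def less_le)
    then have "card C \<le> 2" using card_mono[of "{x,y}" C] a by (simp add: less_le)
    then show "card C - 1 \<le> 1" by simp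
  qed
  moreover have "is_chain_in {x,y} x y" using a by (auto simp: is_chain_in_def)
  then have "card {x,y} - 1 \<le> len x y" by (rule len_ge)
  then have "1 \<le> len x y" using a by (simp add: less_le)
  ultimately show "covpair x y" using a by (simp add: covpair_def less_le)
qed



lemma id1: assumes "(x::'a::{order,finite}) < y" "y < z"
  shows "commut3 (idem x y) (idem y z) = (elem3 x y z :: ('a,'r::comm_ring_1) fn3)"
proof -
  have n: "x \<noteq> y" "y \<noteq> x" "x \<noteq> z" "z \<noteq> x" "y \<noteq> z" "z \<noteq> y" "\<not> y \<le> x" "\<not> z \<le> y" "\<not> z \<le> x"
    using assms by (auto simp: less_le_not_le intro: order_trans)
  show ?thesis
  unfolding commut3_def idem_def mult3_add_left mult3_add_right mult3_elem
  using n assms by (auto simp: fun_eq_iff add3_def elem3_def intro: antisym)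
qed

lemma id2: assumes c: "covpair (x::'a::{order,finite}) b" and "b < z"
  shows "commut3 (idem x b) (elem3 x b z) = add3 (elem3 x x z) (elem3 x b z :: ('a,'r::comm_ring_1) fn3)"
proof -
  have xb: "x < b" "\<And>t. x \<le> t \<Longrightarrow> t \<le> b \<Longrightarrow> t = x \<or> t = b" using c unfolding covpair_iff
    by (auto simp: le_less)
  have n: "x \<noteq> b" "b \<noteq> x" "x \<noteq> z" "z \<noteq> x" "b \<noteq> z" "z \<noteq> b" "\<not> b \<le> x" "\<not> z \<le> b" "\<not> z \<le> x"
    using assms xb by (auto simp: less_le_not_le intro: order_trans)
  show ?thesis
  unfolding commut3_def idem_def mult3_add_left mult3_add_right mult3_elem
  using n assms xb by (auto simp: fun_eq_iff add3_def elem3_def intro: antisym)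
qed

lemma id3: assumes "(x::'a::{order,finite}) < b" and c: "covpair b z"
  shows "commut3 (elem3 x b z) (idem b z) = add3 (elem3 x b z) (elem3 x z z :: ('a,'r::comm_ring_1) fn3)"
proof -
  have bz: "b < z" "\<And>t. b \<le> t \<Longrightarrow> t \<le> z \<Longrightarrow> t = b \<or> t = z" using c unfolding covpair_iff
    by (auto simp: le_less)
  have n: "x \<noteq> b" "b \<noteq> x" "x \<noteq> z" "z \<noteq> x" "b \<noteq> z" "z \<noteq> b" "\<not> b \<le> x" "\<not> z \<le> b" "\<not> z \<le> x"
    using assms bz by (auto simp: less_le_not_le intro: order_trans)
  show ?thesis
  unfolding commut3_def idem_def mult3_add_left mult3_add_right mult3_elem
  using n assms bz by (auto simp: fun_eq_iff add3_def elem3_def intro: antisym)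
qed

lemma id4: assumes c: "covpair (x::'a::{order,finite}) z"
  shows "commut3 (elem3 x x z) (elem3 x z z) = (idem x z :: ('a,'r::comm_ring_1) fn3)"
proof -
  have xz: "x < z" "\<And>t. x \<le> t \<Longrightarrow> t \<le> z \<Longrightarrow> t = x \<or> t = z" using c unfolding covpair_iff
    by (auto simp: le_less)
  have n: "x \<noteq> z" "z \<noteq> x" "\<not> z \<le> x"
    using xz by (auto simp: less_le_not_le)
  show ?thesis
  unfolding commut3_def idem_def mult3_elem
  using n xz by (auto simp: fun_eq_iff add3_def elem3_def intro: antisym)
qed
definition C2 :: "('a::{order,finite}, 'r::comm_ring_1) fn3 set" where
  "C2 = {f \<in> I3. (\<forall>x. f x x x = 0) \<and> (\<forall>x z. covpair x z \<longrightarrow> f x x z = f x z z)}"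
definition C3 :: "('a::{order,finite}, 'r::comm_ring_1) fn3 set" where
  "C3 = {f \<in> C2. \<forall>x z. covpair x z \<longrightarrow> f x x z = 0}"

lemma mult3_diag: "mult3 f g (x::'a::{order,finite}) x x = f x x x * g x x x"
proof -
  have "{(y1, y2). x \<le> y1 \<and> y1 \<le> x \<and> x \<le> y2 \<and> y2 \<le> x} = {(x,x)}" by (auto intro: antisym)
  then show ?thesis by (simp add: mult3_def)
qed

lemma mult3_cov1: assumes "covpair (x::'a::{order,finite}) z"
  shows "mult3 f g x x z = f x x x * g x x z + f x x z * g x z z"
proof -
  have xz: "x < z" "\<And>t. x \<le> t \<Longrightarrow> t \<le> z \<Longrightarrow> t = x \<or> t = z" using assms unfolding covpair_iff
    by (auto simp: le_less)
  have "{(y1, y2). x \<le> y1 \<and> y1 \<le> x \<and> x \<le> y2 \<and> y2 \<le> z} = {(x,x),(x,z)}" using xz by (auto intro: antisym)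
  then show ?thesis using xz less_imp_le[OF xz(1)] by (simp add: mult3_def)
qed

lemma mult3_cov2: assumes "covpair (x::'a::{order,finite}) z"
  shows "mult3 f g x z z = f x x z * g x z z + f x z z * g z z z"
proof -
  have xz: "x < z" "\<And>t. x \<le> t \<Longrightarrow> t \<le> z \<Longrightarrow> t = x \<or> t = z" using assms unfolding covpair_iff
    by (auto simp: le_less)
  have "{(y1, y2). x \<le> y1 \<and> y1 \<le> z \<and> z \<le> y2 \<and> y2 \<le> z} = {(x,z),(z,z)}" using xz by (auto intro: antisym)
  then show ?thesis using xz less_imp_le[OF xz(1)] by (simp add: mult3_def)
qed

lemma mult3_I3: "mult3 f g \<in> I3"
  by (auto simp: I3_def mult3_def)

lemma C2_J31: "C2 \<subseteq> J31" by (auto simp: C2_def J31_def)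

lemma commut_C2: assumes "u \<in> J31" "v \<in> J31" shows "commut3 u v \<in> C2"
proof -
  have "commut3 u v \<in> I3" using mult3_I3[of u v] mult3_I3[of v u] by (auto simp: I3_def commut3_def)
  moreover have "\<forall>x. commut3 u v x x x = 0" using assms by (simp add: commut3_def mult3_diag J31_def)
  moreover have "\<forall>x z. covpair x z \<longrightarrow> commut3 u v x x z = commut3 u v x z z"
    using assms by (simp add: commut3_def mult3_cov1 mult3_cov2 J31_def)
  ultimately show ?thesis by (simp add: C2_def)
qed

lemma C2_zero: "zero3 \<in> C2" by (simp add: C2_def I3_def zero3_def)
lemma C2_add: "f \<in> C2 \<Longrightarrow> g \<in> C2 \<Longrightarrow> add3 f g \<in> C2" by (auto simp: C2_def I3_def add3_def) metis
lemma C2_smul: "f \<in> C2 \<Longrightarrow> smul3 r f \<in> C2" by (auto simp: C2_def I3_def smul3_def) metis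

lemma Z32_C2: "Z32 \<subseteq> C2"
proof
  fix f assume "f \<in> (Z32 :: ('a,'b) fn3 set)"
  then have "f \<in> rspan {commut3 u v |u v. u \<in> J31 \<and> v \<in> J31}" by (simp add: Z32_def commsp_def Z31_def)
  then show "f \<in> C2"
    by (induction rule: rspan.induct) (auto intro: C2_zero C2_add C2_smul commut_C2)
qed

lemma Z33_Z32: "Z33 \<subseteq> Z32"
  unfolding Z33_def using commsp_mono[OF order.trans[OF Z32_C2 C2_J31] order.trans[OF Z32_C2 C2_J31]]
  by (simp add: Z32_def Z31_def)

lemma Z33_C3: "Z33 \<subseteq> C3"
proof
  fix f assume f: "f \<in> (Z33 :: ('a,'b) fn3 set)"
  then have "f \<in> C2" using Z33_Z32 Z32_C2 by blast
  from f have "f \<in> rspan {commut3 u v |u v. u \<in> Z32 \<and> v \<in> Z32}" by (simp add: Z33_def commsp_def)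
  then have "\<forall>x z. covpair x z \<longrightarrow> f x x z = 0"
  proof (induction rule: rspan.induct)
    case zero then show ?case by (simp add: zero3_def)
  next
    case (gen s)
    then obtain u v where s: "s = commut3 u v" and uv: "u \<in> C2" "v \<in> C2" using Z32_C2 by blast
    show ?case using uv unfolding s by (auto simp: commut3_def mult3_cov1 C2_def mult.commute) metis
  next
    case (add f g) then show ?case by (simp add: add3_def)
  next
    case (smul f r) then show ?case by (simp add: smul3_def)
  qed
  then show "f \<in> C3" using \<open>f \<in> C2\<close> by (simp add: C3_def)
qed
lemma elem_J31: "a \<le> b \<Longrightarrow> b \<le> c \<Longrightarrow> a < c \<Longrightarrow> elem3 a b c \<in> J31"
  by (auto simp: J31_def I3_def elem3_def)

lemma idem_J31: "x < y \<Longrightarrow> idem x y \<in> J31"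
  by (auto simp: J31_def I3_def elem3_def idem_def add3_def less_le)

lemma idem_C2: "x < y \<Longrightarrow> idem x y \<in> C2"
  by (auto simp: C2_def I3_def elem3_def idem_def add3_def less_le covpair_iff)

lemma elem_C2: "a < b \<Longrightarrow> b < c \<Longrightarrow> elem3 a b c \<in> C2"
  by (auto simp: C2_def I3_def elem3_def less_le covpair_iff)

lemma g1: assumes U1: "\<And>x y. x < y \<Longrightarrow> idem x y \<in> U"
  shows "x < y \<Longrightarrow> y < z \<Longrightarrow> elem3 x y z \<in> commsp U U"
  using id1[of x y z] commut_in[OF U1 U1] by metis

lemma g2: assumes U1: "\<And>x y. x < y \<Longrightarrow> idem x y \<in> U"
  and U2: "\<And>x y z. x < y \<Longrightarrow> y < z \<Longrightarrow> elem3 x y z \<in> U"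
  and xz: "(x::'a::{order,finite}) < z" "\<not> covpair x z"
  shows "(elem3 x x z :: ('a,'r::comm_ring_1) fn3) \<in> commsp U U"
proof -
  let ?A = "{t. x < t \<and> t < z}"
  have "?A \<noteq> {}" using xz by (auto simp: covpair_iff)
  then obtain b where b: "b \<in> ?A" and bmin: "\<forall>t\<in>?A. t \<le> b \<longrightarrow> b = t"
    using finite_has_minimal[of ?A] by auto
  have cb: "covpair x b" unfolding covpair_iff
  proof (intro conjI allI impI notI)
    show "x < b" using b by simp
    fix t assume "x < t" "t < b"
    then show False using bmin b by (auto dest: order.strict_trans)
  qed
  have bz: "b < z" using b by simp
  have e: "elem3 x x z = (\<lambda>p q r. commut3 (idem x b) (elem3 x b z) p q r - (elem3 x b z :: ('a,'r) fn3) p q r)"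
  proof -
    have e0: "commut3 (idem x b) (elem3 x b z) = add3 (elem3 x x z) (elem3 x b z :: ('a,'r) fn3)" by (rule id2[OF cb bz])
    show ?thesis by (simp add: e0 add3_def fun_eq_iff)
  qed
  have "commut3 (idem x b) (elem3 x b z :: ('a,'r) fn3) \<in> commsp U U"
    using commut_in[OF U1 U2] cb bz by (simp add: covpair_iff)
  moreover have "(elem3 x b z :: ('a,'r) fn3) \<in> commsp U U"
    using g1[OF U1] b by simp
  ultimately show ?thesis unfolding e commsp_def by (rule rspan_sub)
qed

lemma g3: assumes U1: "\<And>x y. x < y \<Longrightarrow> idem x y \<in> U"
  and U2: "\<And>x y z. x < y \<Longrightarrow> y < z \<Longrightarrow> elem3 x y z \<in> U"
  and xz: "(x::'a::{order,finite}) < z" "\<not> covpair x z"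
  shows "(elem3 x z z :: ('a,'r::comm_ring_1) fn3) \<in> commsp U U"
proof -
  let ?A = "{t. x < t \<and> t < z}"
  have "?A \<noteq> {}" using xz by (auto simp: covpair_iff)
  then obtain b where b: "b \<in> ?A" and bmax: "\<forall>t\<in>?A. b \<le> t \<longrightarrow> b = t"
    using finite_has_maximal[of ?A] by auto
  have cb: "covpair b z" unfolding covpair_iff
  proof (intro conjI allI impI notI)
    show "b < z" using b by simp
    fix t assume "b < t" "t < z"
    then show False using bmax b by (auto dest: order.strict_trans)
  qed
  have xb: "x < b" using b by simp
  have e: "elem3 x z z = (\<lambda>p q r. commut3 (elem3 x b z) (idem b z) p q r - (elem3 x b z :: ('a,'r) fn3) p q r)"
  proof -
    have e0: "commut3 (elem3 x b z) (idem b z) = add3 (elem3 x b z) (elem3 x z z :: ('a,'r) fn3)" by (rule id3[OF xb cb])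
    show ?thesis by (simp add: e0 add3_def fun_eq_iff)
  qed
  have "commut3 (elem3 x b z) (idem b z :: ('a,'r) fn3) \<in> commsp U U"
    using commut_in[OF U2 U1] cb xb by (simp add: covpair_iff)
  moreover have "(elem3 x b z :: ('a,'r) fn3) \<in> commsp U U"
    using g1[OF U1] b by simp
  ultimately show ?thesis unfolding e commsp_def by (rule rspan_sub)
qed

lemma decomp_in:
  assumes U1: "\<And>x y. x < y \<Longrightarrow> idem x y \<in> U"
  and U2: "\<And>x y z. x < y \<Longrightarrow> y < z \<Longrightarrow> elem3 x y z \<in> U"
  and h: "(h :: ('a::{order,finite},'r::comm_ring_1) fn3) \<in> I3" "\<And>x. h x x x = 0"
     "\<And>a c. covpair a c \<Longrightarrow> h a a c = 0" "\<And>a c. covpair a c \<Longrightarrow> h a c c = 0"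
  shows "h \<in> commsp U U"
proof -
  have "sum3 (\<lambda>(a,b,c). smul3 (h a b c) (elem3 a b c)) {(a,b,c). h a b c \<noteq> 0} \<in> commsp U U"
    unfolding commsp_def
  proof (rule rspan_sum3)
    fix i assume i: "i \<in> {(a,b,c). h a b c \<noteq> 0}"
    obtain a b c where iabc: "i = (a,b,c)" by (cases i) auto
    have nz: "h a b c \<noteq> 0" using i iabc by simp
    then have ab: "a \<le> b" "b \<le> c" using h(1) by (auto simp: I3_def)
    have "elem3 a b c \<in> commsp U U"
    proof (cases "a = b")
      case True
      then have "a \<noteq> c" using nz h(2) by auto
      then have "a < c" using ab by (simp add: less_le True)
      moreover have "\<not> covpair a c" using nz h(3) True by auto
      ultimately show ?thesis using g2[OF U1 U2] True by blast
    next
      case False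
      show ?thesis
      proof (cases "b = c")
        case True
        then have "a < c" using ab False by (simp add: less_le)
        moreover have "\<not> covpair a c" using nz h(4) True by auto
        ultimately show ?thesis using g3[OF U1 U2] True by blast
      qed (use False ab g1[OF U1] in \<open>auto simp: less_le\<close>)
    qed
    then show "(case i of (a,b,c) \<Rightarrow> smul3 (h a b c) (elem3 a b c)) \<in> rspan {commut3 u v |u v. u \<in> U \<and> v \<in> U}"
      unfolding iabc commsp_def by (simp add: rspan.smul)
  qed simp
  then show ?thesis using decomp[of h] by simp
qed
lemma J31_U1: "x < y \<Longrightarrow> idem x y \<in> J31" by (rule idem_J31)
lemma J31_U2: "x < y \<Longrightarrow> y < z \<Longrightarrow> elem3 x y z \<in> J31"
  by (rule elem_J31) (auto intro: less_imp_le order.strict_trans)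

lemma Z32_U2: "x < y \<Longrightarrow> y < z \<Longrightarrow> elem3 x y z \<in> Z32"
  unfolding Z32_def Z31_def by (rule g1[OF J31_U1])

lemma idem_val: "covpair (a::'a::{order,finite}) c \<Longrightarrow>
  (idem a c :: ('a,'r::comm_ring_1) fn3) p q r = (if (a,c) = (p,r) \<and> (q = p \<or> q = r) then 1 else 0)"
  by (auto simp: idem_def add3_def elem3_def covpair_iff)

lemma f2_val: "sum3 (\<lambda>(a,c). smul3 (f a a c) (idem a c)) {(a,c). covpair a c} p q r
   = (if covpair (p::'a::{order,finite}) r \<and> (q = p \<or> q = r) then f p p r else (0::'r::comm_ring_1))"
proof -
  have "sum3 (\<lambda>(a,c). smul3 (f a a c) (idem a c)) {(a,c). covpair a c} p q r
     = (\<Sum>i\<in>{(a,c). covpair a c}. if i = (p,r) then (if q = p \<or> q = r then f p p r else 0) else 0)"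
    unfolding sum3_def by (intro sum.cong) (auto simp: smul3_def idem_val split: if_splits)
  also have "\<dots> = (if covpair p r \<and> (q = p \<or> q = r) then f p p r else 0)"
    by (subst sum.delta) auto
  finally show ?thesis .
qed

lemma C2_Z32: "C2 \<subseteq> Z32"
proof
  fix f :: "('a::{order,finite},'r::comm_ring_1) fn3"
  assume f: "f \<in> C2"
  define f1 where "f1 = (\<lambda>a b c. if covpair a c \<and> (b = a \<or> b = c) then 0 else f a b c)"
  define f2 where "f2 = sum3 (\<lambda>(a,c). smul3 (f a a c) (idem a c)) {(a,c). covpair a c}"
  have "f1 \<in> commsp J31 J31"
  proof (rule decomp_in[OF J31_U1 J31_U2])
    show "f1 \<in> I3" using f by (auto simp: f1_def C2_def I3_def)
    show "\<And>x. f1 x x x = 0" using f by (auto simp: f1_def C2_def)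
  qed (auto simp: f1_def)
  then have f1z: "f1 \<in> Z32" by (simp add: Z32_def Z31_def)
  have "f2 \<in> rspan {commut3 u v |u v. u \<in> J31 \<and> v \<in> J31}"
    unfolding f2_def
  proof (rule rspan_sum3)
    fix i :: "'a \<times> 'a" assume "i \<in> {(a,c). covpair a c}"
    then obtain a c where i: "i = (a,c)" "covpair a c" by auto
    then have ac: "a < c" by (simp add: covpair_iff)
    have "idem a c = commut3 (elem3 a a c) (elem3 a c c :: ('a,'r) fn3)" by (rule id4[OF i(2), symmetric])
    also have "\<dots> \<in> commsp J31 J31" by (rule commut_in) (use ac in \<open>auto intro: elem_J31\<close>)
    finally show "(case i of (a,c) \<Rightarrow> smul3 (f a a c) (idem a c)) \<in> rspan {commut3 u v |u v. u \<in> J31 \<and> v \<in> J31}"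
      unfolding i commsp_def by (simp add: rspan.smul)
  qed simp
  then have f2z: "f2 \<in> Z32" by (simp add: Z32_def Z31_def commsp_def)
  have "f = add3 f1 f2"
    using f by (auto simp: fun_eq_iff add3_def f1_def f2_def f2_val C2_def) metis
  then show "f \<in> Z32" using f1z f2z by (simp add: Z32_def commsp_def rspan.add)
qed

lemma Z32_eq: "Z32 = C2" using Z32_C2 C2_Z32 by blast

lemma C3_Z33: "C3 \<subseteq> Z33"
proof
  fix f :: "('a::{order,finite},'r::comm_ring_1) fn3"
  assume f: "f \<in> C3"
  show "f \<in> Z33" unfolding Z33_def
  proof (rule decomp_in)
    show "\<And>x y. x < y \<Longrightarrow> idem x y \<in> Z32" using idem_C2 C2_Z32 by blast
    show "\<And>x y z. x < y \<Longrightarrow> y < z \<Longrightarrow> elem3 x y z \<in> Z32" by (rule Z32_U2)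
  qed (use f in \<open>auto simp: C3_def C2_def\<close>)
qed

lemma Z33_eq: "Z33 = C3" using Z33_C3 C3_Z33 by blast
lemma idem_sq: assumes c: "covpair (x::'a::{order,finite}) z"
  shows "mult3 (idem x z) (idem x z) = (idem x z :: ('a,'r::comm_ring_1) fn3)"
proof -
  have xz: "x < z" "\<And>t. x \<le> t \<Longrightarrow> t \<le> z \<Longrightarrow> t = x \<or> t = z" using c unfolding covpair_iff
    by (auto simp: le_less)
  have n: "x \<noteq> z" "z \<noteq> x" "\<not> z \<le> x"
    using xz by (auto simp: less_le_not_le)
  show ?thesis
  unfolding idem_def mult3_add_left mult3_add_right mult3_elem
  using n xz by (auto simp: fun_eq_iff add3_def elem3_def intro: antisym)
qed

lemma smul_smul: "smul3 a (smul3 b f) = smul3 (a * b) f"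
  by (simp add: smul3_def fun_eq_iff mult.assoc)

lemma smul_idem_zero: "covpair x y \<Longrightarrow> smul3 r (idem x y) = zero3 \<longleftrightarrow> r = 0"
  by (auto simp: fun_eq_iff smul3_def zero3_def idem_val)

theorem proposition2p7:
  "\<exists>\<phi> :: ('a::{order,finite}, 'r::comm_ring_1) fn3 \<Rightarrow> ('a, 'r) dsum.
      (\<forall>f \<in> Z32. \<phi> f \<in> DS)
    \<and> (\<forall>f \<in> Z32. \<forall>g \<in> Z32. \<phi> (add3 f g) = ds_add (\<phi> f) (\<phi> g))
    \<and> (\<forall>f \<in> Z32. \<forall>r. \<phi> (smul3 r f) = ds_smul r (\<phi> f))
    \<and> (\<forall>f \<in> Z32. \<forall>g \<in> Z32. \<phi> (mult3 f g) = ds_mult (\<phi> f) (\<phi> g))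
    \<and> (\<forall>d \<in> DS. \<exists>f \<in> Z32. \<phi> f = d)
    \<and> (\<forall>f \<in> Z32. \<phi> f = ds_zero \<longleftrightarrow> f \<in> Z33)"
proof -
  define \<phi> :: "('a, 'r) fn3 \<Rightarrow> ('a, 'r) dsum" where
    "\<phi> = (\<lambda>f x y. if covpair x y then smul3 (f x x y) (idem x y) else zero3)"
  have P1: "\<forall>f \<in> Z32. \<phi> f \<in> DS" by (auto simp: \<phi>_def DS_def)
  have P2: "\<forall>f \<in> Z32. \<forall>g \<in> Z32. \<phi> (add3 f g) = ds_add (\<phi> f) (\<phi> g)"
    by (auto simp: \<phi>_def ds_add_def fun_eq_iff add3_def smul3_def zero3_def distrib_right)
  have P3: "\<forall>f \<in> Z32. \<forall>r. \<phi> (smul3 r f) = ds_smul r (\<phi> f)"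
    by (auto simp: \<phi>_def ds_smul_def fun_eq_iff smul3_def zero3_def mult.assoc)
  have P4: "\<forall>f \<in> Z32. \<forall>g \<in> Z32. \<phi> (mult3 f g) = ds_mult (\<phi> f) (\<phi> g)"
  proof (intro ballI)
    fix f g :: "('a,'r) fn3" assume "f \<in> Z32" "g \<in> Z32"
    then have f: "f \<in> C2" and g: "g \<in> C2" using Z32_eq by auto
    show "\<phi> (mult3 f g) = ds_mult (\<phi> f) (\<phi> g)"
    proof (rule ext, rule ext)
      fix x y :: 'a
      show "\<phi> (mult3 f g) x y = ds_mult (\<phi> f) (\<phi> g) x y"
      proof (cases "covpair x y")
        case True
        have "mult3 f g x x y = f x x y * g x x y"
          using f g True by (auto simp: mult3_cov1 C2_def) metis
        moreover have "mult3 (smul3 (f x x y) (idem x y)) (smul3 (g x x y) (idem x y))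
            = smul3 (f x x y * g x x y) (idem x y :: ('a,'r) fn3)"
          by (simp add: mult3_smul_left mult3_smul_right idem_sq[OF True] smul_smul mult.commute)
        ultimately show ?thesis using True by (simp add: \<phi>_def ds_mult_def)
      next
        case False
        then show ?thesis by (simp add: \<phi>_def ds_mult_def mult3_zero)
      qed
    qed
  qed
  have P5: "\<forall>d \<in> DS. \<exists>f \<in> Z32. \<phi> f = d"
  proof
    fix d :: "('a,'r) dsum" assume d: "d \<in> DS"
    define f :: "('a,'r) fn3" where "f = (\<lambda>a b c. if covpair a c \<and> (b = a \<or> b = c) then d a c a a c else 0)"
    have "f \<in> C2"
      by (auto simp: C2_def I3_def f_def covpair_iff less_le)
    moreover have "\<phi> f = d"
    proof (rule ext, rule ext)
      fix x y :: 'a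
      show "\<phi> f x y = d x y"
      proof (cases "covpair x y")
        case True
        then obtain r where r: "d x y = smul3 r (idem x y)" using d by (auto simp: DS_def)
        have "d x y x x y = r" using True by (simp add: r smul3_def idem_val)
        then show ?thesis using True r by (simp add: \<phi>_def f_def)
      next
        case False
        then show ?thesis using d by (simp add: \<phi>_def DS_def)
      qed
    qed
    ultimately show "\<exists>f \<in> Z32. \<phi> f = d" using Z32_eq by auto
  qed
  have P6: "\<forall>f \<in> Z32. \<phi> f = ds_zero \<longleftrightarrow> f \<in> Z33"
  proof
    fix f :: "('a,'r) fn3" assume "f \<in> Z32"
    then have f: "f \<in> C2" using Z32_eq by auto
    have "\<phi> f = ds_zero \<longleftrightarrow> (\<forall>x y. covpair x y \<longrightarrow> f x x y = 0)"
    proof -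
      have e1: "\<phi> f = ds_zero \<longleftrightarrow> (\<forall>x y. \<phi> f x y = zero3)"
      proof
        assume "\<phi> f = ds_zero" then show "\<forall>x y. \<phi> f x y = zero3" by (simp add: ds_zero_def)
      next
        assume h: "\<forall>x y. \<phi> f x y = zero3"
        show "\<phi> f = ds_zero" unfolding ds_zero_def by (rule ext, rule ext) (use h in simp)
      qed
      have e2: "(\<forall>x y. \<phi> f x y = zero3) \<longleftrightarrow> (\<forall>x y. covpair x y \<longrightarrow> f x x y = 0)"
        by (simp add: \<phi>_def smul_idem_zero)
      show ?thesis using e1 e2 by simp
    qed
    then show "\<phi> f = ds_zero \<longleftrightarrow> f \<in> Z33" using f Z33_eq by (auto simp: C3_def)
  qed
  show ?thesis using P1 P2 P3 P4 P5 P6 by blast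
qed
end
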